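(* Consider scheduling a single task on $n\ge 2$ machines without payments, in the model where machines are bound by their declarations (described in the context). Fix constants $L>2(n-1)$ and $c>1$, and let $\mathcal A_{L,c}$ be the following randomized allocation rule. Given declarations $\hat{\mathbf t}=(\hat t_1,\dots,\hat t_n)$, let $\hat t_{\min}$ be the smallest declaration and $N_{\min}$ the set of machines declaring it, and let $\hat t_{\mathrm{sec}}$ be the second smallest distinct declaration and $N_{\mathrm{sec}}$ the set of machines declaring it (if all machines declare the same value, set $\hat t_{\mathrm{sec}}=\hat t_{\min}$); let $n_{\min}=|N_{\min}|$, $n_{\mathrm{sec}}=|N_{\mathrm{sec}}|$. The probability $a_i$ that machine $i$ gets the task is: (i) if $\hat t_{\min}=\hat t_{\mathrm{sec}}$: $a_i=\tfrac1n$ for all $i$; (ii) if $\hat t_{\min}<\hat t_{\mathrm{sec}}<c\,\hat t_{\min}$: $a_i=\frac{1}{L\,n_{\min}}$ for $i\in N_{\min}$, $a_i=\frac{1-1/L}{n_{\mathrm{sec}}}$ for $i\in N_{\mathrm{sec}}$, and $a_i=0$ otherwise; (iii) if $\hat t_{\mathrm{sec}}\ge c\,\hat t_{\min}$: $a_i=\frac{1}{n_{\min}}\Big(1-\sum_{k\notin N_{\min}}\frac{\hat t_{\min}}{L\,\hat t_k}\Big)$ for $i\in N_{\min}$, and $a_i=\frac{\hat t_{\min}}{L\,\hat t_i}$ for $i\notin N_{\min}$. Then the pure Price of Anarchy of $\mathcal A_{L,c}$ is at most $1+\frac{n-1}{L}$.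
   Context: Model: there are $n$ machines and one task. Machine $i$ has a private true execution time $t_i\ge 0$ for the task and reports a declaration $\hat t_i\ge 0$. A (randomized) allocation rule maps the declaration vector $\hat{\mathbf t}$ to probabilities $a_i(\hat{\mathbf t})$ with $\sum_i a_i=1$; no payments are used. Machines are bound by their declarations: if machine $i$ gets the task she executes it for time $\max\{\hat t_i,t_i\}$. Hence the (expected) cost of machine $i$ is $C_i(\hat{\mathbf t})=a_i(\hat{\mathbf t})\max\{\hat t_i,t_i\}$, and the makespan is $\mathcal M(\hat{\mathbf t})=\sum_i a_i(\hat{\mathbf t})\max\{\hat t_i,t_i\}$. A pure Nash equilibrium is a deterministic declaration vector $\hat{\mathbf t}$ such that for every machine $i$ and every alternative declaration $x\ge 0$, $C_i(\hat{\mathbf t})\le C_i(x,\hat{\mathbf t}_{-i})$. The pure Price of Anarchy of a rule is the supremum, over all true instances $\mathbf t$, of the ratio of the makespan of the worst pure Nash equilibrium to the optimal makespan $\min_i t_i$. *)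

theory Defs
  imports Complex_Main "HOL-Library.Extended_Real"
begin

text \<open>Machines are indexed by 0..n-1. A declaration vector / true-time vector is a
function nat => real; only the values on {..<n} matter.
An allocation rule maps a declaration vector to the probabilities a_i.\<close>

type_synonym alloc_rule = "(nat \<Rightarrow> real) \<Rightarrow> nat \<Rightarrow> real"

definition t_min :: "nat \<Rightarrow> (nat \<Rightarrow> real) \<Rightarrow> real" where
  "t_min n d = Min (d ` {..<n})"

definition N_min :: "nat \<Rightarrow> (nat \<Rightarrow> real) \<Rightarrow> nat set" where
  "N_min n d = {i. i < n \<and> d i = t_min n d}"

definition t_sec :: "nat \<Rightarrow> (nat \<Rightarrow> real) \<Rightarrow> real" where
  "t_sec n d = (if {..<n} - N_min n d = {} then t_min n d
                else Min (d ` ({..<n} - N_min n d)))"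

definition N_sec :: "nat \<Rightarrow> (nat \<Rightarrow> real) \<Rightarrow> nat set" where
  "N_sec n d = {i. i < n \<and> d i = t_sec n d}"

definition alloc_Lc :: "nat \<Rightarrow> real \<Rightarrow> real \<Rightarrow> alloc_rule" where
  "alloc_Lc n L c d i =
     (if t_min n d = t_sec n d then 1 / real n
      else if t_sec n d < c * t_min n d then
        (if i \<in> N_min n d then 1 / (L * real (card (N_min n d)))
         else if i \<in> N_sec n d then (1 - 1 / L) / real (card (N_sec n d))
         else 0)
      else
        (if i \<in> N_min n d then
           (1 / real (card (N_min n d))) *
             (1 - (\<Sum>k\<in>{..<n} - N_min n d. t_min n d / (L * d k)))
         else t_min n d / (L * d i)))"

text \<open>Expected cost of machine i (bound by declarations).\<close>
definition cost :: "alloc_rule \<Rightarrow> (nat \<Rightarrow> real) \<Rightarrow> (nat \<Rightarrow> real) \<Rightarrow> nat \<Rightarrow> real" where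
  "cost a t d i = a d i * max (d i) (t i)"

definition makespan :: "alloc_rule \<Rightarrow> nat \<Rightarrow> (nat \<Rightarrow> real) \<Rightarrow> (nat \<Rightarrow> real) \<Rightarrow> real" where
  "makespan a n t d = (\<Sum>i<n. a d i * max (d i) (t i))"

definition pure_NE :: "alloc_rule \<Rightarrow> nat \<Rightarrow> (nat \<Rightarrow> real) \<Rightarrow> (nat \<Rightarrow> real) \<Rightarrow> bool" where
  "pure_NE a n t d \<longleftrightarrow>
     (\<forall>i<n. 0 \<le> d i) \<and>
     (\<forall>i<n. \<forall>x\<ge>0. cost a t d i \<le> cost a t (d(i := x)) i)"

text \<open>Pure Price of Anarchy: supremum over true instances (with positive optimal
makespan min_i t_i) of worst pure NE makespan divided by the optimum.\<close>
definition pure_PoA :: "alloc_rule \<Rightarrow> nat \<Rightarrow> ereal" where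
  "pure_PoA a n =
     (SUP t \<in> {t. \<forall>i<n. 0 < t i}.
        SUP d \<in> {d. pure_NE a n t d}.
          ereal (makespan a n t d / Min (t ` {..<n})))"

end

theory Submission
  imports Defs
begin

lemma tmin_le: "i < n \<Longrightarrow> t_min n d \<le> d i"
  unfolding t_min_def by (rule Min_le) auto

lemma tmin_ex: "0 < n \<Longrightarrow> \<exists>j<n. d j = t_min n d"
proof -
  assume "0 < n"
  then have "Min (d ` {..<n}) \<in> d ` {..<n}" by (intro Min_in) auto
  then show ?thesis unfolding t_min_def by auto
qed

lemma tmin_eq: "j < n \<Longrightarrow> (\<And>i. i<n \<Longrightarrow> d j \<le> d i) \<Longrightarrow> t_min n d = d j"
  unfolding t_min_def by (rule Min_eqI) auto

lemma tsec_all: "(\<And>i. i<n \<Longrightarrow> d i = t_min n d) \<Longrightarrow> t_sec n d = t_min n d"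
  unfolding t_sec_def N_min_def by auto

lemma tsec_props:
  assumes "i < n" "d i \<noteq> t_min n d"
  shows "t_sec n d \<le> d i" "t_min n d < t_sec n d" "\<exists>k<n. d k \<noteq> t_min n d \<and> d k = t_sec n d"
proof -
  let ?S = "{..<n} - N_min n d"
  have ne: "?S \<noteq> {}" using assms unfolding N_min_def by auto
  have ts: "t_sec n d = Min (d ` ?S)" using ne unfolding t_sec_def by simp
  have iS: "i \<in> ?S" using assms unfolding N_min_def by auto
  show "t_sec n d \<le> d i" unfolding ts using iS by (intro Min_le) auto
  have "Min (d ` ?S) \<in> d ` ?S" using ne by (intro Min_in) auto
  then obtain k where k: "k \<in> ?S" "d k = t_sec n d" using ts by auto
  then show "\<exists>k<n. d k \<noteq> t_min n d \<and> d k = t_sec n d" unfolding N_min_def by auto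
  have "t_min n d \<le> d k" using k tmin_le[of k n d] by auto
  moreover have "d k \<noteq> t_min n d" using k unfolding N_min_def by auto
  ultimately show "t_min n d < t_sec n d" using k by auto
qed

lemma tsec_eq:
  assumes "k < n" "d k \<noteq> t_min n d" "\<And>i. i<n \<Longrightarrow> d i \<noteq> t_min n d \<Longrightarrow> d k \<le> d i"
  shows "t_sec n d = d k"
proof -
  let ?S = "{..<n} - N_min n d"
  have ne: "?S \<noteq> {}" using assms unfolding N_min_def by auto
  have ts: "t_sec n d = Min (d ` ?S)" using ne unfolding t_sec_def by simp
  show ?thesis unfolding ts using assms unfolding N_min_def by (intro Min_eqI) auto
qed

lemma um:
  assumes "i < n" "\<And>k. k<n \<Longrightarrow> k \<noteq> i \<Longrightarrow> d i < d k" "2 \<le> n"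
  shows "t_min n d = d i" "N_min n d = {i}" "t_sec n d = Min (d ` ({..<n} - {i}))"
    "alloc_Lc n L c d i = (if t_sec n d < c * d i then 1/L
        else 1 - (\<Sum>k\<in>{..<n}-{i}. d i / (L * d k)))"
proof -
  show tm: "t_min n d = d i" using assms by (intro tmin_eq) (auto simp: less_imp_le intro: order.strict_implies_order)
  show nm: "N_min n d = {i}" unfolding N_min_def tm using assms by force
  have "(if i = 0 then 1 else 0) \<in> {..<n} - {i}" using assms by auto
  then have ne: "{..<n} - N_min n d \<noteq> {}" unfolding nm by blast
  show ts: "t_sec n d = Min (d ` ({..<n} - {i}))" unfolding t_sec_def using ne nm by simp
  have "Min (d ` ({..<n} - {i})) \<in> d ` ({..<n} - {i})" using ne nm by (intro Min_in) auto
  then have "t_min n d < t_sec n d" unfolding ts tm using assms by (auto, metis)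
  then show "alloc_Lc n L c d i = (if t_sec n d < c * d i then 1/L
        else 1 - (\<Sum>k\<in>{..<n}-{i}. d i / (L * d k)))"
    unfolding alloc_Lc_def nm tm by simp
qed



lemma Gstar:
  assumes "i < n" "d i \<noteq> t_min n d" "d i = t_sec n d \<longrightarrow> c * t_min n d \<le> t_sec n d"
    "0 < L" "0 \<le> t_min n d" "0 < d i"
  shows "alloc_Lc n L c d i \<le> t_min n d / (L * d i)"
proof -
  have lt: "t_min n d < t_sec n d" using tsec_props(2)[OF assms(1,2)] .
  have nm: "i \<notin> N_min n d" using assms unfolding N_min_def by auto
  have nn: "0 \<le> t_min n d / (L * d i)" using assms by simp
  show ?thesis
  proof (cases "t_sec n d < c * t_min n d")
    case True
    then have "i \<notin> N_sec n d" using assms unfolding N_sec_def by auto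
    then show ?thesis using True lt nm nn unfolding alloc_Lc_def by auto
  next
    case False
    then show ?thesis using lt nm unfolding alloc_Lc_def by auto
  qed
qed

context
  fixes n :: nat and L c :: real and t d :: "nat \<Rightarrow> real"
  assumes n2: "2 \<le> n" and Lb: "L > 2 * (real n - 1)" and c1: "c > 1"
    and tpos: "\<And>i. i < n \<Longrightarrow> 0 < t i"
    and NE: "pure_NE (alloc_Lc n L c) n t d"
begin

lemma Ln: "L > real n" using Lb n2 by simp
lemma L0: "L > 0" using Ln by simp

lemma dnn: "i < n \<Longrightarrow> 0 \<le> d i" using NE unfolding pure_NE_def by auto

lemma NEi: "i < n \<Longrightarrow> 0 \<le> x \<Longrightarrow>
   alloc_Lc n L c d i * max (d i) (t i) \<le> alloc_Lc n L c (d(i:=x)) i * max x (t i)"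
  using NE unfolding pure_NE_def cost_def by auto

lemma cv_gen: "0 \<le> (v::real) \<Longrightarrow> v \<le> c * v"
  using c1 mult_right_mono[of 1 c v] by simp

lemma tmin_nn: "0 \<le> t_min n d"
proof -
  obtain j where "j < n" "d j = t_min n d" using tmin_ex[of n d] n2 by auto
  then show ?thesis using dnn[of j] by simp
qed

lemma DEV:
  assumes "i < n" "j < n" "j \<noteq> i" "d j = t_min n d" "c * t_min n d \<le> x" "t_min n d < x" "t i \<le> x"
  shows "alloc_Lc n L c (d(i:=x)) i * max x (t i) \<le> t_min n d / L"
proof -
  let ?d = "d(i:=x)"
  have tm: "t_min n ?d = t_min n d"
  proof -
    have "t_min n ?d = ?d j"
      by (rule tmin_eq) (use assms tmin_le[of _ n d] in auto)
    then show ?thesis using assms by simp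
  qed
  have x0: "0 < x" using assms tmin_nn by linarith
  have "alloc_Lc n L c ?d i \<le> t_min n ?d / (L * ?d i)"
    by (rule Gstar) (use assms tm L0 tmin_nn x0 in auto)
  then have "alloc_Lc n L c ?d i \<le> t_min n d / (L * x)" using tm by simp
  then have "alloc_Lc n L c ?d i * x \<le> t_min n d / (L * x) * x"
    using x0 by (intro mult_right_mono) auto
  also have "\<dots> = t_min n d / L" using x0 by simp
  finally show ?thesis using assms by simp
qed

lemma notA: "t_min n d < t_sec n d"
proof -
  have "\<exists>i<n. d i \<noteq> t_min n d"
  proof (rule ccontr)
    assume "\<not> ?thesis"
    then have all: "\<And>i. i < n \<Longrightarrow> d i = t_min n d" by auto
    have ts: "t_sec n d = t_min n d" using tsec_all all by blast
    let ?v = "t_min n d"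
    define x where "x = max (c * ?v) (t 0) + 1"
    have cv: "?v \<le> c * ?v" using cv_gen[OF tmin_nn] .
    have "alloc_Lc n L c (d(0:=x)) 0 * max x (t 0) \<le> ?v / L"
      by (rule DEV[of 0 1]) (use n2 all cv in \<open>auto simp: x_def\<close>)
    moreover have "alloc_Lc n L c d 0 * max (d 0) (t 0) \<le> alloc_Lc n L c (d(0:=x)) 0 * max x (t 0)"
      using NEi[of 0 x] n2 cv tmin_nn by (auto simp: x_def)
    moreover have "alloc_Lc n L c d 0 = 1 / real n" using ts unfolding alloc_Lc_def by simp
    moreover have "d 0 = ?v" using all n2 by auto
    ultimately have le: "max ?v (t 0) / real n \<le> ?v / L" by simp
    have mp: "0 < max ?v (t 0)" using tpos[of 0] n2 by auto
    have "?v / L \<le> max ?v (t 0) / L" using L0 by (simp add: divide_right_mono)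
    also have "\<dots> < max ?v (t 0) / real n" using mp Ln n2 by (intro divide_strict_left_mono) auto
    finally show False using le by simp
  qed
  then show ?thesis using tsec_props(2) by blast
qed

lemma notB: "\<not> t_sec n d < c * t_min n d"
proof
  assume B: "t_sec n d < c * t_min n d"
  have "\<exists>i<n. d i \<noteq> t_min n d"
    by (rule ccontr) (use tsec_all[of n d] notA in auto)
  then obtain i where "i < n" "d i \<noteq> t_min n d" by blast
  then obtain k where k: "k < n" "d k \<noteq> t_min n d" "d k = t_sec n d"
    using tsec_props(3) by blast
  obtain j where j: "j < n" "d j = t_min n d" using tmin_ex[of n d] n2 by auto
  have jk: "j \<noteq> k" using j k by auto
  let ?ns = "card (N_sec n d)"
  have sub: "N_sec n d \<subseteq> {..<n} - {j}" unfolding N_sec_def using j notA by auto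
  have "?ns \<le> card ({..<n} - {j})" using sub by (intro card_mono) auto
  then have ns1: "real ?ns \<le> real n - 1" using j by auto
  have "k \<in> N_sec n d" using k unfolding N_sec_def by auto
  moreover have "finite (N_sec n d)" using sub finite_subset by blast
  ultimately have ns0: "1 \<le> ?ns" by (metis One_nat_def Suc_leI card_gt_0_iff empty_iff)
  have kn: "k \<notin> N_min n d" using k unfolding N_min_def by auto
  have a: "alloc_Lc n L c d k = (1 - 1/L) / real ?ns"
    using notA B kn \<open>k \<in> N_sec n d\<close> unfolding alloc_Lc_def by auto
  let ?v = "t_min n d"
  define x where "x = max (c * ?v) (t k) + 1"
  have cv: "?v \<le> c * ?v" using cv_gen[OF tmin_nn] .
  have "alloc_Lc n L c (d(k:=x)) k * max x (t k) \<le> ?v / L"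
    by (rule DEV[of k j]) (use k j jk cv in \<open>auto simp: x_def\<close>)
  moreover have "alloc_Lc n L c d k * max (d k) (t k) \<le> alloc_Lc n L c (d(k:=x)) k * max x (t k)"
    using NEi[of k x] k cv tmin_nn by (auto simp: x_def)
  ultimately have le: "(1 - 1/L) / real ?ns * max (t_sec n d) (t k) \<le> ?v / L" using a k by simp
  have h1: "(1 - 1/L) / (real n - 1) \<le> (1 - 1/L) / real ?ns"
    using ns0 ns1 Ln n2 by (intro divide_left_mono) (auto simp: field_simps)
  have h2: "1 / L < (1 - 1/L) / (real n - 1)" using Ln n2 L0 by (simp add: field_simps)
  have ts0: "0 < t_sec n d" using notA tmin_nn by linarith
  have "?v / L < t_sec n d / L" using notA L0 by (simp add: divide_strict_right_mono)
  also have "\<dots> = 1 / L * t_sec n d" by simp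
  also have "\<dots> < (1 - 1/L) / (real n - 1) * t_sec n d" using h2 ts0 by (intro mult_strict_right_mono)
  also have "\<dots> \<le> (1 - 1/L) / real ?ns * t_sec n d" using h1 ts0 by (intro mult_right_mono) auto
  also have "\<dots> \<le> (1 - 1/L) / real ?ns * max (t_sec n d) (t k)"
    using ns0 L0 Ln n2 by (intro mult_left_mono) (auto simp: field_simps)
  finally show False using le by simp
qed

lemma notC: "\<exists>i0<n. \<forall>k<n. k \<noteq> i0 \<longrightarrow> d i0 < d k"
proof -
  obtain j where j: "j < n" "d j = t_min n d" using tmin_ex[of n d] n2 by auto
  show ?thesis
  proof (rule ccontr)
    assume "\<not> ?thesis"
    then obtain i where i: "i < n" "i \<noteq> j" "\<not> d j < d i" using j by blast
    have di: "d i = t_min n d" using i j tmin_le[of i n d] by auto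
    let ?v = "t_min n d"
    let ?M = "N_min n d"
    let ?nm = "card ?M"
    have Msub: "?M \<subseteq> {..<n}" unfolding N_min_def by auto
    have fM: "finite ?M" using Msub finite_subset by blast
    have iM: "i \<in> ?M" "j \<in> ?M" using i j di unfolding N_min_def by auto
    have nm1: "1 \<le> ?nm" using iM fM by (metis card_0_eq empty_iff not_less_eq_eq le_zero_eq One_nat_def)
    have nmn: "?nm \<le> n" using Msub by (metis card_lessThan card_mono finite_lessThan)
    have cd: "card ({..<n} - ?M) = n - ?nm" using Msub fM by (simp add: card_Diff_subset)
    have terms: "\<forall>k\<in>{..<n} - ?M. ?v / (L * d k) \<le> 1 / L"
    proof
      fix k assume "k \<in> {..<n} - ?M"
      then have "k < n" "d k \<noteq> ?v" unfolding N_min_def by auto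
      then have "?v < d k" using tmin_le[of k n d] by auto
      then show "?v / (L * d k) \<le> 1 / L" using tmin_nn L0 by (simp add: field_simps)
    qed
    have "(\<Sum>k\<in>{..<n} - ?M. ?v / (L * d k)) \<le> (\<Sum>k\<in>{..<n} - ?M. 1 / L)"
      by (rule sum_mono) (use terms in auto)
    also have "\<dots> = real (card ({..<n} - ?M)) * (1 / L)" by simp
    also have "\<dots> = (real n - real ?nm) / L" using cd nmn by (simp add: of_nat_diff)
    finally have sumle: "(\<Sum>k\<in>{..<n} - ?M. ?v / (L * d k)) \<le> (real n - real ?nm) / L" .
    have ai: "alloc_Lc n L c d i = 1 / real ?nm * (1 - (\<Sum>k\<in>{..<n} - ?M. ?v / (L * d k)))"
      using notA notB iM unfolding alloc_Lc_def by auto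
    have "1 / real ?nm * (1 - (real n - real ?nm) / L) \<le> alloc_Lc n L c d i"
      unfolding ai using sumle nm1 by (intro mult_left_mono) auto
    moreover have "1 / L < 1 / real ?nm * (1 - (real n - real ?nm) / L)"
      using Ln nm1 L0 by (simp add: field_simps)
    ultimately have agt: "1 / L < alloc_Lc n L c d i" by linarith
    define x where "x = max (c * ?v) (t i) + ?v + 1"
    have cv: "?v \<le> c * ?v" using cv_gen[OF tmin_nn] .
    have "alloc_Lc n L c (d(i:=x)) i * max x (t i) \<le> ?v / L"
      by (rule DEV[of i j]) (use i j cv tmin_nn in \<open>auto simp: x_def\<close>)
    moreover have "alloc_Lc n L c d i * max (d i) (t i) \<le> alloc_Lc n L c (d(i:=x)) i * max x (t i)"
      using NEi[of i x] i cv tmin_nn by (auto simp: x_def)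
    ultimately have le: "alloc_Lc n L c d i * max ?v (t i) \<le> ?v / L" using di by simp
    have mp: "0 < max ?v (t i)" using tpos[of i] i by auto
    have "?v / L \<le> 1 / L * max ?v (t i)" using L0 by (simp add: divide_right_mono)
    also have "\<dots> < alloc_Lc n L c d i * max ?v (t i)" using agt mp by (intro mult_strict_right_mono)
    finally show False using le by simp
  qed
qed

lemma bound: "makespan (alloc_Lc n L c) n t d \<le> (1 + (real n - 1) / L) * Min (t ` {..<n})"
proof -
  obtain i0 where i0: "i0 < n" "\<And>k. k < n \<Longrightarrow> k \<noteq> i0 \<Longrightarrow> d i0 < d k" using notC by blast
  define D where "D = d i0"
  define R where "R = {..<n} - {i0}"
  have tmD: "t_min n d = D" using um(1)[of i0 n d, OF i0(1) i0(2) n2] D_def by simp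
  have tsR: "t_sec n d = Min (d ` R)" using um(3)[of i0 n d, OF i0(1) i0(2) n2] R_def by simp
  define S where "S = (\<Sum>k\<in>R. 1 / (L * d k))"
  have D0: "0 \<le> D" using dnn i0 D_def by simp
  have dk: "\<And>k. k \<in> R \<Longrightarrow> D < d k" using i0 unfolding R_def D_def by auto
  have dk0: "\<And>k. k \<in> R \<Longrightarrow> 0 < d k" using dk D0 by fastforce
  have finR: "finite R" unfolding R_def by simp
  have Rne: "(if i0 = 0 then 1 else 0) \<in> R" using n2 i0 unfolding R_def by auto
  have cardR: "card R = n - 1" unfolding R_def using i0 by simp
  have sumx: "\<And>x. (\<Sum>k\<in>R. x / (L * d k)) = x * S"
    unfolding S_def by (simp add: sum_distrib_left)
  have aD0: "alloc_Lc n L c d i0 = (if t_sec n d < c * d i0 then 1/L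
        else 1 - (\<Sum>k\<in>{..<n}-{i0}. d i0 / (L * d k)))"
    using um(4)[of i0 n d, OF i0(1) i0(2) n2, of L c] .
  have "\<not> t_sec n d < c * d i0" using notB tmD D_def by simp
  then have "alloc_Lc n L c d i0 = 1 - (\<Sum>k\<in>R. D / (L * d k))"
    using aD0 unfolding R_def D_def by simp
  then have aD: "alloc_Lc n L c d i0 = 1 - D * S" using sumx by simp
  have S0: "0 < S" unfolding S_def
    by (rule sum_pos[OF finR]) (use Rne dk0 L0 in auto)
  have "D * S = (\<Sum>k\<in>R. D / (L * d k))" using sumx by simp
  also have "\<dots> \<le> (\<Sum>k\<in>R. 1 / L)"
  proof (rule sum_mono)
    fix k assume "k \<in> R"
    then have "D \<le> d k" "0 < d k" using dk dk0 by (auto intro: less_imp_le)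
    then show "D / (L * d k) \<le> 1 / L" using L0 by (simp add: field_simps)
  qed
  also have "\<dots> = (real n - 1) / L" using cardR n2 by (simp add: of_nat_diff)
  finally have DS: "D * S \<le> (real n - 1) / L" .
  have "(real n - 1) / L < 1 / 2" using Lb L0 by (simp add: field_simps)
  then have DS2: "D * S < 1 / 2" using DS by linarith
  have DSL: "1 / L < 1 - D * S"
  proof -
    have "1 / L + (real n - 1) / L = real n / L" using L0 by (simp add: field_simps)
    also have "\<dots> < 1" using Ln L0 by simp
    finally show ?thesis using DS by linarith
  qed
  have DS0: "0 \<le> D * S" using D0 S0 by simp
  have tsd: "\<And>k. k \<in> R \<Longrightarrow> t_sec n d \<le> d k"
    unfolding tsR using finR by (intro Min_le) auto
  have tsD: "D < t_sec n d" using notA tmD by simp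
  have dev0: "alloc_Lc n L c (d(i0:=x)) i0 = (if t_sec n d < c * x then 1 / L else 1 - x * S)"
    if x: "0 \<le> x" "x < t_sec n d" for x
  proof -
    let ?d = "d(i0:=x)"
    have um2: "\<And>k. k < n \<Longrightarrow> k \<noteq> i0 \<Longrightarrow> ?d i0 < ?d k"
      using x tsd unfolding R_def by fastforce
    have A1: "t_sec n ?d = Min (?d ` R)" using um(3)[of i0 n "d(i0:=x)", OF i0(1) um2 n2] unfolding R_def .
    have img: "?d ` R = d ` R" unfolding R_def by auto
    have ts': "t_sec n ?d = t_sec n d" using A1 img tsR by metis
    have "(\<Sum>k\<in>R. ?d i0 / (L * ?d k)) = (\<Sum>k\<in>R. x / (L * d k))"
      unfolding R_def by (intro sum.cong) auto
    then show ?thesis using um(4)[of i0 n "d(i0:=x)", OF i0(1) um2 n2, of L c] ts' sumx R_def by simp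
  qed
  have ti0: "t i0 \<le> D"
  proof (rule ccontr)
    assume "\<not> t i0 \<le> D"
    then have lt: "D < t i0" by simp
    define x where "x = (D + min (t i0) (t_sec n d)) / 2"
    have x: "D < x" "x < t i0" "x < t_sec n d" using lt tsD unfolding x_def by auto
    have ne: "alloc_Lc n L c d i0 * max D (t i0) \<le> alloc_Lc n L c (d(i0:=x)) i0 * max x (t i0)"
      using NEi[of i0 x] i0 x D0 D_def by simp
    have "alloc_Lc n L c (d(i0:=x)) i0 < 1 - D * S"
    proof -
      have "1 - x * S < 1 - D * S" using x S0 by simp
      then show ?thesis using dev0[of x] x D0 DSL by auto
    qed
    then have "alloc_Lc n L c (d(i0:=x)) i0 * t i0 < (1 - D * S) * t i0"
      using tpos[OF i0(1)] by (intro mult_strict_right_mono)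
    then show False using ne aD x lt by simp
  qed
  have ti0': "D \<le> t i0"
  proof (rule ccontr)
    assume "\<not> D \<le> t i0"
    then have lt: "t i0 < D" by simp
    define x where "x = t i0"
    have x: "0 < x" "x < D" using lt tpos[OF i0(1)] unfolding x_def by auto
    have ne: "alloc_Lc n L c d i0 * max D (t i0) \<le> alloc_Lc n L c (d(i0:=x)) i0 * max x (t i0)"
      using NEi[of i0 x] i0 x D_def by simp
    then have ne': "(1 - D * S) * D \<le> alloc_Lc n L c (d(i0:=x)) i0 * x"
      using aD x unfolding x_def by simp
    have "alloc_Lc n L c (d(i0:=x)) i0 * x < (1 - D * S) * D"
    proof (cases "t_sec n d < c * x")
      case True
      then have "alloc_Lc n L c (d(i0:=x)) i0 = 1 / L" using dev0[of x] x tsD by simp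
      moreover have "1 / L * x < 1 / L * D" using x L0 by (simp add: divide_strict_right_mono)
      moreover have "1 / L * D < (1 - D * S) * D" using DSL x by (intro mult_strict_right_mono) auto
      ultimately show ?thesis by simp
    next
      case False
      then have a: "alloc_Lc n L c (d(i0:=x)) i0 = 1 - x * S" using dev0[of x] x tsD by simp
      have sx: "S * x < S * D" using x S0 by simp
      have e: "S * (D + x) = D * S + S * x" by (simp add: algebra_simps)
      have "S * (D + x) < 1" using DS2 sx unfolding e by (simp add: mult.commute)
      then have "0 < (D - x) * (1 - S * (D + x))" using x by simp
      moreover have "(1 - D * S) * D - (1 - x * S) * x = (D - x) * (1 - S * (D + x))"
        by (simp add: algebra_simps)
      ultimately show ?thesis using a by simp
    qed
    then show False using ne' by simp
  qed
  have Deq: "t i0 = D" using ti0 ti0' by simp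
  have Dpos: "0 < D" using Deq tpos[OF i0(1)] by simp
  define m where "m = Min (t ` {..<n})"
  have mle: "m \<le> t i0" unfolding m_def using i0 by (intro Min_le) auto
  obtain js where js: "js < n" "t js = m"
  proof -
    have "m \<in> t ` {..<n}" unfolding m_def using n2 by (intro Min_in) (auto simp: lessThan_empty_iff)
    then show ?thesis using that by auto
  qed
  have mD: "m = D"
  proof (rule ccontr)
    assume "m \<noteq> D"
    then have lt: "m < D" using mle Deq by simp
    have jsi: "js \<noteq> i0" using js lt Deq by auto
    have Dc: "D / c < D" using Dpos c1 by (simp add: divide_less_eq)
    obtain M where mx: "m \<le> M" "D/c \<le> M" "M < D" using lt Dc
      by (intro that[of "max m (D/c)"]) auto
    define x where "x = (M + D) / 2"
    have x1: "m < x" using mx unfolding x_def by (simp add: field_simps)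
    have xM: "M < x" using mx unfolding x_def by (simp add: field_simps)
    have x2: "D / c < x" using mx(2) xM by linarith
    have x3: "x < D" using mx unfolding x_def by (simp add: field_simps)
    note x = x1 x2 x3
    have x0: "0 < x" using x tpos[OF js(1)] js by simp
    let ?d = "d(js:=x)"
    have um2: "\<And>k. k < n \<Longrightarrow> k \<noteq> js \<Longrightarrow> ?d js < ?d k"
    proof -
      fix k assume k: "k < n" "k \<noteq> js"
      show "?d js < ?d k"
      proof (cases "k = i0")
        case True then show ?thesis using k x D_def by simp
      next
        case False then have "D < d k" using dk k unfolding R_def by simp
        then show ?thesis using k x by simp
      qed
    qed
    have "t_sec n ?d = Min (?d ` ({..<n} - {js}))" using um(3)[of js n "d(js:=x)", OF js(1) um2 n2] .
    also have "\<dots> = D"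
    proof (rule Min_eqI)
      show "finite (?d ` ({..<n} - {js}))" by simp
      show "D \<in> ?d ` ({..<n} - {js})" using i0 jsi D_def by (auto intro!: image_eqI[of _ _ i0])
      fix y assume "y \<in> ?d ` ({..<n} - {js})"
      then obtain k where k: "k < n" "k \<noteq> js" "y = ?d k" by auto
      then show "D \<le> y"
      proof (cases "k = i0")
        case True then show ?thesis using k D_def by simp
      next
        case False then have "D < d k" using dk k unfolding R_def by simp
        then show ?thesis using k by simp
      qed
    qed
    finally have ts': "t_sec n ?d = D" .
    have "D < c * x" using x(2) c1 by (simp add: divide_less_eq mult.commute)
    then have a': "alloc_Lc n L c ?d js = 1 / L" using um(4)[of js n "d(js:=x)", OF js(1) um2 n2, of L c] ts' by simp
    have ne: "alloc_Lc n L c d js * max (d js) (t js) \<le> alloc_Lc n L c ?d js * max x (t js)"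
      using NEi[of js x] js x0 by simp
    have djs: "D < d js" using dk jsi js unfolding R_def by simp
    have nm: "js \<notin> N_min n d" using djs tmD unfolding N_min_def by simp
    have ajs: "alloc_Lc n L c d js = D / (L * d js)"
      using notA notB nm tmD unfolding alloc_Lc_def by simp
    have "D / L = D / (L * d js) * d js" using djs Dpos by simp
    also have "\<dots> \<le> D / (L * d js) * max (d js) (t js)"
      using djs Dpos L0 by (intro mult_left_mono) auto
    also have "\<dots> \<le> 1 / L * max x (t js)" using ne ajs a' by simp
    also have "\<dots> = x / L" using x js by simp
    finally have "D / L \<le> x / L" .
    then show False using x L0 by (simp add: divide_le_cancel)
  qed
  have others: "alloc_Lc n L c d k * max (d k) (t k) \<le> D / L" if k: "k \<in> R" for k
  proof -
    define x where "x = max (c * D) (t k) + D + 1"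
    have kk: "k < n" "k \<noteq> i0" using k unfolding R_def by auto
    have "alloc_Lc n L c (d(k:=x)) k * max x (t k) \<le> t_min n d / L"
      by (rule DEV[of k i0]) (use kk i0 tmD D_def D0 cv_gen[OF D0] tpos[OF kk(1)] in \<open>auto simp: x_def\<close>)
    moreover have "alloc_Lc n L c d k * max (d k) (t k) \<le> alloc_Lc n L c (d(k:=x)) k * max x (t k)"
      using NEi[of k x] kk D0 cv_gen[OF D0] tpos[OF kk(1)] by (auto simp: x_def)
    ultimately show ?thesis using tmD by simp
  qed
  have "makespan (alloc_Lc n L c) n t d
      = alloc_Lc n L c d i0 * max (d i0) (t i0) + (\<Sum>k\<in>R. alloc_Lc n L c d k * max (d k) (t k))"
    unfolding makespan_def R_def using i0 by (simp add: sum.remove)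
  also have "\<dots> \<le> D + (\<Sum>k\<in>R. D / L)"
  proof (rule add_mono)
    have "alloc_Lc n L c d i0 * max (d i0) (t i0) = (1 - D * S) * D" using aD Deq D_def by simp
    also have "\<dots> = D - (D * S) * D" by (simp add: algebra_simps)
    also have "\<dots> \<le> D" using DS0 D0 by simp
    finally show "alloc_Lc n L c d i0 * max (d i0) (t i0) \<le> D" .
    show "(\<Sum>k\<in>R. alloc_Lc n L c d k * max (d k) (t k)) \<le> (\<Sum>k\<in>R. D / L)"
      using others by (rule sum_mono)
  qed
  also have "\<dots> = (1 + (real n - 1) / L) * D" using cardR n2 by (simp add: of_nat_diff field_simps)
  finally show ?thesis using mD m_def by simp
qed

end

theorem theorem2:
  fixes n :: nat and L c :: real
  assumes "n \<ge> 2" and "L > 2 * (real n - 1)" and "c > 1"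
  shows "pure_PoA (alloc_Lc n L c) n \<le> ereal (1 + (real n - 1) / L)"
  unfolding pure_PoA_def
proof (rule SUP_least, rule SUP_least)
  fix t d
  assume t: "t \<in> {t. \<forall>i<n. 0 < t i}" and d: "d \<in> {d. pure_NE (alloc_Lc n L c) n t d}"
  have tp: "\<And>i. i < n \<Longrightarrow> 0 < t i" using t by auto
  have ne: "pure_NE (alloc_Lc n L c) n t d" using d by auto
  have b: "makespan (alloc_Lc n L c) n t d \<le> (1 + (real n - 1) / L) * Min (t ` {..<n})"
    by (rule bound[OF assms(1) assms(2) assms(3) tp ne])
  have "Min (t ` {..<n}) \<in> t ` {..<n}" using assms(1) by (intro Min_in) (auto simp: lessThan_empty_iff)
  then have mp: "0 < Min (t ` {..<n})" using tp by auto
  have "makespan (alloc_Lc n L c) n t d / Min (t ` {..<n}) \<le> 1 + (real n - 1) / L"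
    using b mp by (simp add: divide_le_eq)
  then show "ereal (makespan (alloc_Lc n L c) n t d / Min (t ` {..<n})) \<le> ereal (1 + (real n - 1) / L)"
    by simp
qed

end
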